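(* Let $f:\mathbb{R}^n\to\mathbb{R}$ be a continuously differentiable convex function. Let $H$ be a diagonal matrix with nonnegative diagonal entries such that $f(y)\le f(x)+\nabla f(x)^T(y-x)+\tfrac12\|y-x\|_H^2$ for all $x,y$, and let $D$ be diagonal with $D\succ H$. Let $(x_k)$ be a sequence generated by the IWHT algorithm with $D$, and assume $(x_k)$ is bounded. Then $f(x_k)$ converges to a limit $f^*$ and there exist $K\in\mathbb{N}$ and $c>0$ such that $f(x_k)-f^*\le c/k$ for all $k\ge K$. If moreover $f$ is $s$-restricted strongly convex, then $f(x_k)$ converges to $f^*$ linearly, i.e. there exist $c>0$ and $\rho\in(0,1)$ with $f(x_k)-f^*\le c\rho^k$ for all sufficiently large $k$.
   Context: $\|z\|_A^2=z^TAz$. $C_s=\{x\in\mathbb{R}^n:\|x\|_0\le s\}$ for a positive integer $s$, where $\|x\|_0$ is the number of nonzero entries. $\mathcal{P}_{C_s}(z)=\operatorname{argmin}_{y\in C_s}\|y-z\|_2^2$ (set-valued). IWHT with diagonal $D\succ0$: start from $x_0\in C_s$; pick $y_{k+1}\in\mathcal{P}_{C_s}\big(D^{1/2}x_k-D^{-1/2}\nabla f(x_k)\big)$ and set $x_{k+1}=D^{-1/2}y_{k+1}$. $f$ is $s$-restricted strongly convex if there is $\sigma_s>0$ with $f(y)\ge f(x)+\nabla f(x)^T(y-x)+\frac{\sigma_s}{2}\|x-y\|_2^2$ for all $x,y$ with $\|x-y\|_0\le s$. *)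

theory Defs
  imports "HOL-Analysis.Analysis"
begin

definition l0norm :: "real^'n \<Rightarrow> nat" where
  "l0norm x = card {i. x $ i \<noteq> 0}"

definition sparse_set :: "nat \<Rightarrow> (real^'n) set" where
  "sparse_set s = {x. l0norm x \<le> s}"

definition proj_sparse :: "nat \<Rightarrow> real^'n \<Rightarrow> (real^'n) set" where
  "proj_sparse s z = {y \<in> sparse_set s. \<forall>y' \<in> sparse_set s. norm (y - z)^2 \<le> norm (y' - z)^2}"

definition is_diag :: "real^'n^'n \<Rightarrow> bool" where
  "is_diag A \<longleftrightarrow> (\<forall>i j. i \<noteq> j \<longrightarrow> A $ i $ j = 0)"

definition quad_norm_sq :: "real^'n^'n \<Rightarrow> real^'n \<Rightarrow> real" where
  "quad_norm_sq A z = z \<bullet> (A *v z)"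

definition pos_def :: "real^'n^'n \<Rightarrow> bool" where
  "pos_def A \<longleftrightarrow> (\<forall>z. z \<noteq> 0 \<longrightarrow> z \<bullet> (A *v z) > 0)"

definition diag_sqrt :: "real^'n^'n \<Rightarrow> real^'n^'n" where
  "diag_sqrt D = (\<chi> i j. if i = j then sqrt (D $ i $ i) else 0)"

definition diag_inv_sqrt :: "real^'n^'n \<Rightarrow> real^'n^'n" where
  "diag_inv_sqrt D = (\<chi> i j. if i = j then 1 / sqrt (D $ i $ i) else 0)"

definition iwht_seq :: "nat \<Rightarrow> real^'n^'n \<Rightarrow> (real^'n \<Rightarrow> real^'n) \<Rightarrow> (nat \<Rightarrow> real^'n) \<Rightarrow> bool" where
  "iwht_seq s D grad x \<longleftrightarrow> x 0 \<in> sparse_set s \<and>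
     (\<forall>k. \<exists>y \<in> proj_sparse s (diag_sqrt D *v x k - diag_inv_sqrt D *v grad (x k)).
            x (Suc k) = diag_inv_sqrt D *v y)"

definition restricted_strongly_convex :: "nat \<Rightarrow> (real^'n \<Rightarrow> real) \<Rightarrow> (real^'n \<Rightarrow> real^'n) \<Rightarrow> bool" where
  "restricted_strongly_convex s f grad \<longleftrightarrow> (\<exists>\<sigma>>0. \<forall>x y. l0norm (x - y) \<le> s \<longrightarrow>
      f y \<ge> f x + grad x \<bullet> (y - x) + \<sigma> / 2 * norm (x - y)^2)"

end

theory Submission
  imports Defs
begin

lemma diag_mult_comp:
  assumes "is_diag D" shows "(D *v v) $ i = D$i$i * v$i"
proof -
  have "(D *v v) $ i = (\<Sum>j\<in>UNIV. D$i$j * v$j)" by (simp add: matrix_vector_mult_def)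
  also have "\<dots> = (\<Sum>j\<in>{i}. D$i$j * v$j)"
    by (rule sum.mono_neutral_right) (use assms in \<open>auto simp: is_diag_def\<close>)
  finally show ?thesis by simp
qed

lemma sqrt_mult_comp: "(diag_sqrt D *v v) $ i = sqrt (D$i$i) * v$i"
  by (subst diag_mult_comp) (auto simp: is_diag_def diag_sqrt_def)

lemma inv_sqrt_mult_comp: "(diag_inv_sqrt D *v v) $ i = v$i / sqrt (D$i$i)"
  by (subst diag_mult_comp) (auto simp: is_diag_def diag_inv_sqrt_def)

lemma quad_diag: assumes "is_diag D" shows "quad_norm_sq D v = (\<Sum>i\<in>UNIV. D$i$i * (v$i)^2)"
  by (simp add: quad_norm_sq_def inner_vec_def diag_mult_comp[OF assms] power2_eq_square algebra_simps)

lemma norm_sq_comp: "norm (v::real^'n)^2 = (\<Sum>i\<in>UNIV. (v$i)^2)"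
  unfolding power2_norm_eq_inner inner_vec_def by (simp add: power2_eq_square)

lemma inner_comp: "(v::real^'n) \<bullet> w = (\<Sum>i\<in>UNIV. v$i * w$i)"
  by (simp add: inner_vec_def)

lemma l0norm_scale:
  assumes "\<And>i. (w::real^'n)$i = c i * v$i" "\<And>i. c i \<noteq> 0"
  shows "l0norm w = l0norm v"
  unfolding l0norm_def using assms by simp

lemma l0norm_mono:
  assumes "\<And>i. (v::real^'n)$i \<noteq> 0 \<Longrightarrow> w$i \<noteq> 0"
  shows "l0norm v \<le> l0norm w"
  unfolding l0norm_def using assms by (intro card_mono) auto

lemma grad_ineq:
  fixes f :: "real^'n \<Rightarrow> real"
  assumes grad: "\<And>z. (f has_derivative (\<lambda>h. grad z \<bullet> h)) (at z)"
    and cvx: "convex_on UNIV f"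
  shows "f u \<ge> f x + grad x \<bullet> (u - x)"
proof -
  define \<phi> where "\<phi> t = f (x + t *\<^sub>R (u - x))" for t :: real
  have cphi: "convex_on UNIV \<phi>"
  proof (rule convex_onI)
    fix a t1 t2 :: real assume a: "0 < a" "a < 1" "t1 \<in> UNIV" "t2 \<in> UNIV"
    have "\<phi> ((1 - a) * t1 + a * t2) = f ((1 - a) *\<^sub>R (x + t1 *\<^sub>R (u - x)) + a *\<^sub>R (x + t2 *\<^sub>R (u - x)))"
      unfolding \<phi>_def by (simp add: algebra_simps)
    also have "\<dots> \<le> (1 - a) * f (x + t1 *\<^sub>R (u - x)) + a * f (x + t2 *\<^sub>R (u - x))"
      using a by (intro convex_onD[OF cvx]) auto
    finally show "\<phi> ((1 - a) *\<^sub>R t1 + a *\<^sub>R t2) \<le> (1 - a) * \<phi> t1 + a * \<phi> t2" by (simp add: \<phi>_def)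
  qed simp
  have d: "((\<lambda>t. x + t *\<^sub>R (u - x)) has_derivative (\<lambda>t. t *\<^sub>R (u - x))) (at 0)"
    by (auto intro!: derivative_eq_intros)
  have "(\<phi> has_derivative (\<lambda>t. grad x \<bullet> (t *\<^sub>R (u - x)))) (at 0)"
    unfolding \<phi>_def using has_derivative_compose[OF d grad[of "x + 0 *\<^sub>R (u - x)"]] by (simp add: o_def)
  hence "(\<phi> has_field_derivative (grad x \<bullet> (u - x))) (at 0)"
    by (simp add: has_field_derivative_def mult.commute[of _ "grad x \<bullet> (u - x)"])
  hence "\<phi> 1 - \<phi> 0 \<ge> (grad x \<bullet> (u - x)) * (1 - 0)"
    by (intro convex_on_imp_above_tangent[OF cphi]) auto
  thus ?thesis unfolding \<phi>_def by simp
qed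

lemma key_identity:
  assumes dpos: "\<And>i. D$i$i > 0" and Ddiag: "is_diag D"
  shows "norm (diag_sqrt D *v v - (diag_sqrt D *v x - diag_inv_sqrt D *v g))^2
     = 2 * (g \<bullet> (v - x) + 1/2 * quad_norm_sq D (v - x)) + (\<Sum>i\<in>UNIV. (g$i)^2 / D$i$i)"
proof -
  have c: "(sqrt d * a - (sqrt d * b - c / sqrt d))^2 = d * (a - b)^2 + 2 * (c * (a - b)) + c^2 / d"
    if "d > 0" for d a b c :: real
  proof -
    have "sqrt d ^ 2 = d" using that by simp
    moreover have "sqrt d > 0" using that by simp
    ultimately show ?thesis by (simp add: field_simps power2_eq_square)
  qed
  have "norm (diag_sqrt D *v v - (diag_sqrt D *v x - diag_inv_sqrt D *v g))^2
     = (\<Sum>i\<in>UNIV. (sqrt (D$i$i) * v$i - (sqrt (D$i$i) * x$i - g$i / sqrt (D$i$i)))^2)"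
    by (simp add: norm_sq_comp sqrt_mult_comp inv_sqrt_mult_comp)
  also have "\<dots> = (\<Sum>i\<in>UNIV. D$i$i * (v$i - x$i)^2 + 2 * (g$i * (v$i - x$i)) + (g$i)^2 / D$i$i)"
    by (rule sum.cong) (simp_all add: c dpos)
  also have "\<dots> = 2 * (g \<bullet> (v - x) + 1/2 * quad_norm_sq D (v - x)) + (\<Sum>i\<in>UNIV. (g$i)^2 / D$i$i)"
    unfolding quad_diag[OF Ddiag] inner_comp sum.distrib sum_distrib_left[symmetric] by (simp add: algebra_simps)
  finally show ?thesis .
qed

lemma step:
  fixes D :: "real^'n^'n"
  assumes dpos: "\<And>i. D$i$i > 0" and Ddiag: "is_diag D"
    and y: "y \<in> proj_sparse s (diag_sqrt D *v x - diag_inv_sqrt D *v g)"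
    and x': "x' = diag_inv_sqrt D *v y"
  shows "x' \<in> sparse_set s"
    and "\<And>w::real^'n. w \<in> sparse_set s \<Longrightarrow> g \<bullet> (x' - x) + 1/2 * quad_norm_sq D (x' - x)
                 \<le> g \<bullet> (w - x) + 1/2 * quad_norm_sq D (w - x)"
proof -
  have ys: "y \<in> sparse_set s" using y by (simp add: proj_sparse_def)
  have sq: "sqrt (D$i$i) \<noteq> 0" for i using dpos[of i] by simp
  have dz: "D$i$i \<noteq> 0" for i using dpos[of i] by simp
  have "l0norm x' = l0norm y"
    by (rule l0norm_scale[where c = "\<lambda>i. 1 / sqrt (D$i$i)"]) (auto simp: x' inv_sqrt_mult_comp sq dz)
  thus "x' \<in> sparse_set s" using ys by (simp add: sparse_set_def)
  have yx: "y = diag_sqrt D *v x'"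
    by (simp add: vec_eq_iff x' sqrt_mult_comp inv_sqrt_mult_comp sq dz)
  fix w :: "real^'n" assume w: "w \<in> sparse_set s"
  have "l0norm (diag_sqrt D *v w) = l0norm w"
    by (rule l0norm_scale[where c = "\<lambda>i. sqrt (D$i$i)"]) (auto simp: sqrt_mult_comp sq dz)
  hence "diag_sqrt D *v w \<in> sparse_set s" using w by (simp add: sparse_set_def)
  with y have "norm (y - (diag_sqrt D *v x - diag_inv_sqrt D *v g))^2
     \<le> norm (diag_sqrt D *v w - (diag_sqrt D *v x - diag_inv_sqrt D *v g))^2"
    by (simp add: proj_sparse_def)
  thus "g \<bullet> (x' - x) + 1/2 * quad_norm_sq D (x' - x)
                 \<le> g \<bullet> (w - x) + 1/2 * quad_norm_sq D (w - x)"
    unfolding yx key_identity[OF dpos Ddiag] by simp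
qed

lemma rate1:
  fixes a :: "nat \<Rightarrow> real"
  assumes rec: "\<And>k. k \<ge> K \<Longrightarrow> a (Suc k) \<le> a k - (a k)^2 / (2 * R)"
    and nn: "\<And>k. 0 \<le> a k" and le: "\<And>k. a k \<le> R" and R: "R > 0"
  shows "a (K + j) \<le> 2 * R / (real j + 1)"
proof (induction j)
  case 0 then show ?case using le[of K] R by simp
next
  case (Suc j)
  let ?a = "a (K + j)"
  have r: "a (K + Suc j) \<le> ?a - ?a^2 / (2 * R)" using rec[of "K + j"] by simp
  show ?case
  proof (cases "?a \<le> 2 * R / (real j + 2)")
    case True
    have "?a^2 / (2 * R) \<ge> 0" using R by simp
    with r True show ?thesis by (simp add: add.commute)
  next
    case False
    hence gt: "?a > 2 * R / (real j + 2)" by simp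
    have "?a - ?a^2 / (2 * R) = ?a * (1 - ?a / (2 * R))" using R by (simp add: field_simps power2_eq_square)
    also have "\<dots> \<le> (2 * R / (real j + 1)) * (1 - 1 / (real j + 2))"
    proof -
      have h2: "1 - ?a / (2 * R) \<le> 1 - 1 / (real j + 2)"
        using gt R by (simp add: field_simps)
      have h3: "0 \<le> 2 * R / (real j + 1)" using R by simp
      have h4: "0 \<le> 1 - ?a / (2 * R)" using le[of "K + j"] R by (simp add: field_simps)
      show ?thesis by (rule mult_mono[OF _ h2 h3 h4]) (use Suc.IH in \<open>simp add: add.commute\<close>)
    qed
    also have "\<dots> = 2 * R / (real (Suc j) + 1)"
    proof -
      have e: "1 - 1 / (real j + 2) = (real j + 1) / (real j + 2)" by (simp add: field_simps)
      show ?thesis unfolding e by (simp add: add.commute)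
    qed
    finally show ?thesis using r by simp
  qed
qed

lemma rate2:
  fixes a :: "nat \<Rightarrow> real"
  assumes rec: "\<And>k. k \<ge> K \<Longrightarrow> a (Suc k) \<le> \<rho> * a k" and \<rho>: "\<rho> \<ge> 0"
  shows "a (K + j) \<le> \<rho> ^ j * a K"
proof (induction j)
  case (Suc j)
  have "a (K + Suc j) \<le> \<rho> * a (K + j)" using rec[of "K + j"] by simp
  also have "\<dots> \<le> \<rho> * (\<rho> ^ j * a K)" using Suc.IH \<rho> by (rule mult_left_mono)
  finally show ?case by simp
qed simp

lemma dpos_lemma:
  fixes D H :: "real^'n^'n"
  assumes "pos_def (D - H)" "\<And>i. H$i$i \<ge> 0"
  shows "D$i$i > 0"
proof -
  have "axis i 1 \<bullet> ((D - H) *v axis i (1::real)) > 0"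
    using assms(1) unfolding pos_def_def by (metis axis_eq_0_iff zero_neq_one)
  moreover have "((D - H) *v axis i (1::real))$i = (D - H)$i$i"
    by (simp add: matrix_vector_mult_def axis_def if_distrib cong: if_cong)
  ultimately have "(D - H)$i$i > 0"
    by (simp add: inner_axis')
  thus ?thesis using assms(2)[of i] by simp
qed

lemma quad_le:
  fixes D H :: "real^'n^'n"
  assumes "pos_def (D - H)"
  shows "quad_norm_sq H v \<le> quad_norm_sq D v"
proof -
  have "v \<bullet> ((D - H) *v v) \<ge> 0"
    using assms unfolding pos_def_def by (cases "v = 0") (auto intro: less_imp_le)
  thus ?thesis unfolding quad_norm_sq_def by (simp add: matrix_vector_mult_diff_rdistrib inner_diff_right)
qed

lemma quad_scale: "quad_norm_sq D (t *\<^sub>R v) = t^2 * quad_norm_sq D v"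
  unfolding quad_norm_sq_def by (simp add: matrix_vector_mult_scaleR power2_eq_square)

lemma quad_bound:
  fixes D :: "real^'n^'n"
  obtains M where "M > 0" "\<And>v. quad_norm_sq D v \<le> M * norm v ^ 2"
proof -
  have "bounded_linear (\<lambda>v. D *v v)" by (simp add: linear_conv_bounded_linear)
  then obtain M where M: "M > 0" "\<And>v. norm (D *v v) \<le> norm v * M"
    using bounded_linear.pos_bounded by blast
  have "quad_norm_sq D v \<le> M * norm v ^ 2" for v
  proof -
    have "quad_norm_sq D v \<le> norm v * norm (D *v v)"
      unfolding quad_norm_sq_def by (rule order_trans[OF abs_ge_self Cauchy_Schwarz_ineq2])
    also have "\<dots> \<le> norm v * (norm v * M)" using M by (simp add: mult_left_mono)
    finally show ?thesis by (simp add: power2_eq_square algebra_simps)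
  qed
  with M that show ?thesis by blast
qed

theorem corollary4p10:
  fixes f :: "real^'n \<Rightarrow> real" and grad :: "real^'n \<Rightarrow> real^'n"
    and H D :: "real^'n^'n" and s :: nat and x :: "nat \<Rightarrow> real^'n"
  assumes s_pos: "s > 0"
    and grad: "\<And>z. (f has_derivative (\<lambda>h. grad z \<bullet> h)) (at z)"
    and grad_cont: "continuous_on UNIV grad"
    and cvx: "convex_on UNIV f"
    and H_diag: "is_diag H" and H_nonneg: "\<And>i. H $ i $ i \<ge> 0"
    and upper: "\<And>u v. f v \<le> f u + grad u \<bullet> (v - u) + 1/2 * quad_norm_sq H (v - u)"
    and D_diag: "is_diag D" and D_gt_H: "pos_def (D - H)"
    and iwht: "iwht_seq s D grad x"
    and bdd: "bounded (range x)"
  shows "\<exists>fstar. (\<lambda>k. f (x k)) \<longlonglongrightarrow> fstar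
           \<and> (\<exists>K c. c > 0 \<and> (\<forall>k\<ge>K. f (x k) - fstar \<le> c / real k))
           \<and> (restricted_strongly_convex s f grad \<longrightarrow>
                (\<exists>c \<rho>. c > 0 \<and> 0 < \<rho> \<and> \<rho> < 1 \<and>
                   (\<forall>\<^sub>F k in sequentially. f (x k) - fstar \<le> c * \<rho> ^ k)))"
proof -
  have dpos: "\<And>i. D$i$i > 0" using dpos_lemma[OF D_gt_H H_nonneg] .
  have ex: "\<forall>k. \<exists>yy. yy \<in> proj_sparse s (diag_sqrt D *v x k - diag_inv_sqrt D *v grad (x k))
      \<and> x (Suc k) = diag_inv_sqrt D *v yy"
    using iwht unfolding iwht_seq_def by blast
  obtain y where yy: "\<forall>k. y k \<in> proj_sparse s (diag_sqrt D *v x k - diag_inv_sqrt D *v grad (x k))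
      \<and> x (Suc k) = diag_inv_sqrt D *v y k"
    using choice[OF ex] ..
  have y: "\<And>k. y k \<in> proj_sparse s (diag_sqrt D *v x k - diag_inv_sqrt D *v grad (x k))"
    and xs: "\<And>k. x (Suc k) = diag_inv_sqrt D *v y k" using yy by auto
  have x0: "x 0 \<in> sparse_set s" using iwht by (simp add: iwht_seq_def)
  have xsp: "x k \<in> sparse_set s" for k
    by (cases k) (use x0 step(1)[OF dpos D_diag y xs] in auto)
  have main: "f (x (Suc k)) \<le> f (x k) + grad (x k) \<bullet> (w - x k) + 1/2 * quad_norm_sq D (w - x k)"
    if "w \<in> sparse_set s" for k w
  proof -
    have "f (x (Suc k)) \<le> f (x k) + grad (x k) \<bullet> (x (Suc k) - x k) + 1/2 * quad_norm_sq H (x (Suc k) - x k)"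
      by (rule upper)
    also have "\<dots> \<le> f (x k) + grad (x k) \<bullet> (x (Suc k) - x k) + 1/2 * quad_norm_sq D (x (Suc k) - x k)"
      using quad_le[OF D_gt_H] by simp
    also have "\<dots> \<le> f (x k) + grad (x k) \<bullet> (w - x k) + 1/2 * quad_norm_sq D (w - x k)"
      using step(2)[OF dpos D_diag y xs that] by simp
    finally show ?thesis .
  qed
  have dec: "f (x (Suc k)) \<le> f (x k)" for k
    using main[OF xsp[of k], of k] by (simp add: quad_norm_sq_def)
  have fcont: "continuous_on UNIV f"
    using grad has_derivative_continuous continuous_at_imp_continuous_on by blast
  obtain B where B: "B > 0" "\<And>k. norm (x k) \<le> B"
    using bdd unfolding bounded_pos by auto
  obtain z where z: "\<forall>v\<in>cball 0 B. f z \<le> f v"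
    using continuous_attains_inf[of "cball 0 B" f] continuous_on_subset[OF fcont] B(1) by auto
  have lb: "f z \<le> f (x k)" for k using z B(2) by simp
  have decs: "decseq (\<lambda>k. f (x k))" using dec by (simp add: decseq_Suc_iff)
  obtain fstar where lim: "(\<lambda>k. f (x k)) \<longlonglongrightarrow> fstar" and ge: "\<forall>k. fstar \<le> f (x k)"
    using decseq_convergent[OF decs, of "f z"] lb by blast
  define a where "a k = f (x k) - fstar" for k
  have ann: "0 \<le> a k" for k using ge by (simp add: a_def)
  have adec: "a k \<le> a 0" for k using decs by (simp add: a_def decseq_def)
  define supp where "supp v = {i. (v::real^'n)$i \<noteq> 0}" for v
  define P where "P S \<longleftrightarrow> (\<exists>u. supp u \<subseteq> S \<and> f u \<le> fstar \<and> norm u \<le> B)" for S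
  have fin: "finite {k. supp (x k) = S}" if nP: "\<not> P S" for S
  proof (rule ccontr)
    assume inf: "infinite {k. supp (x k) = S}"
    obtain r :: "nat \<Rightarrow> nat" where r: "strict_mono r" "\<forall>n. r n \<in> {k. supp (x k) = S}"
      using infinite_enumerate[OF inf] by metis
    have bxr: "bounded (range (x \<circ> r))" using bdd by (rule bounded_subset) auto
    obtain l and r2 :: "nat \<Rightarrow> nat" where r2: "strict_mono r2" "((x \<circ> r) \<circ> r2) \<longlonglongrightarrow> l"
      using bounded_imp_convergent_subsequence[OF bxr] by blast
    have nl: "norm l \<le> B"
      by (rule LIMSEQ_le_const2[OF tendsto_norm[OF r2(2)]]) (simp add: B(2))
    have sl: "supp l \<subseteq> S"
    proof
      fix i assume i: "i \<in> supp l"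
      show "i \<in> S"
      proof (rule ccontr)
        assume "i \<notin> S"
        then have "\<forall>n. ((x \<circ> r) \<circ> r2) n $ i = 0" using r(2) by (auto simp: supp_def)
        moreover have "(\<lambda>n. ((x \<circ> r) \<circ> r2) n $ i) \<longlonglongrightarrow> l$i" using tendsto_vec_nth[OF r2(2)] .
        ultimately have "(\<lambda>n. 0::real) \<longlonglongrightarrow> l$i" by simp
        hence "l$i = 0" using LIMSEQ_unique[OF _ tendsto_const] by blast
        with i show False by (simp add: supp_def)
      qed
    qed
    have l1: "(\<lambda>n. f (((x \<circ> r) \<circ> r2) n)) \<longlonglongrightarrow> f l"
      using continuous_on_tendsto_compose[OF fcont r2(2)] by simp
    have l2: "(\<lambda>n. f (((x \<circ> r) \<circ> r2) n)) \<longlonglongrightarrow> fstar"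
      using LIMSEQ_subseq_LIMSEQ[OF lim strict_mono_o[OF r(1) r2(1)]] by (simp add: o_def)
    have "f l = fstar" using LIMSEQ_unique[OF l1 l2] .
    with nl sl nP show False unfolding P_def by auto
  qed
  have "finite (\<Union>S\<in>{S. \<not> P S}. {k. supp (x k) = S})"
    by (rule finite_UN_I) (simp_all add: fin)
  then obtain K0 where K0: "\<forall>k\<in>(\<Union>S\<in>{S. \<not> P S}. {k. supp (x k) = S}). k \<le> K0"
    using finite_nat_set_iff_bounded_le by blast
  define K where "K = Suc K0"
  have PK: "P (supp (x k))" if "k \<ge> K" for k
  proof (rule ccontr)
    assume "\<not> P (supp (x k))"
    hence "k \<in> (\<Union>S\<in>{S. \<not> P S}. {k. supp (x k) = S})" by blast
    with K0 have "k \<le> K0" by blast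
    with that show False by (simp add: K_def)
  qed
  have exu: "\<forall>k. \<exists>v. k \<ge> K \<longrightarrow> supp v \<subseteq> supp (x k) \<and> f v \<le> fstar \<and> norm v \<le> B"
    using PK unfolding P_def by blast
  obtain u where uu: "\<forall>k. K \<le> k \<longrightarrow> supp (u k) \<subseteq> supp (x k) \<and> f (u k) \<le> fstar \<and> norm (u k) \<le> B"
    using choice[OF exu] ..
  have u: "\<And>k. k \<ge> K \<Longrightarrow> supp (u k) \<subseteq> supp (x k) \<and> f (u k) \<le> fstar \<and> norm (u k) \<le> B"
    using uu by blast
  obtain M where M: "M > 0" "\<And>v. quad_norm_sq D v \<le> M * norm v ^ 2" using quad_bound by blast
  have wsp: "x k + t *\<^sub>R (u k - x k) \<in> sparse_set s" if "k \<ge> K" for k t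
  proof -
    have "l0norm (x k + t *\<^sub>R (u k - x k)) \<le> l0norm (x k)"
      by (rule l0norm_mono) (use u[OF that] in \<open>auto simp: supp_def\<close>)
    thus ?thesis using xsp[of k] by (simp add: sparse_set_def)
  qed
  have lsp: "l0norm (x k - u k) \<le> s" if "k \<ge> K" for k
  proof -
    have "l0norm (x k - u k) \<le> l0norm (x k)"
      by (rule l0norm_mono) (use u[OF that] in \<open>auto simp: supp_def\<close>)
    thus ?thesis using xsp[of k] by (simp add: sparse_set_def)
  qed
  have nb: "norm (u k - x k)^2 \<le> 4 * B^2" if "k \<ge> K" for k
  proof -
    have "norm (u k - x k) \<le> norm (u k) + norm (x k)" by (rule norm_triangle_ineq4)
    also have "\<dots> \<le> 2 * B" using u[OF that] B(2)[of k] by simp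
    finally have "norm (u k - x k)^2 \<le> (2 * B)^2" by (rule power_mono) simp
    thus ?thesis by (simp add: power_mult_distrib)
  qed
  have stepk: "a (Suc k) \<le> a k + t * (grad (x k) \<bullet> (u k - x k)) + t^2/2 * quad_norm_sq D (u k - x k)"
    if "k \<ge> K" for k t
    using main[OF wsp[OF that, of t], of k] by (simp add: a_def quad_scale)
  have gi: "grad (x k) \<bullet> (u k - x k) \<le> - a k" if "k \<ge> K" for k
    using grad_ineq[OF grad cvx, of "x k" "u k"] u[OF that] by (simp add: a_def)
  define R where "R = 4 * M * B^2 + a 0 + 1"
  have MB: "0 \<le> 4 * M * B^2" using M(1) by simp
  have R: "R > 0" using ann[of 0] MB unfolding R_def by linarith
  have aR: "a k \<le> R" for k using adec[of k] MB unfolding R_def by linarith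
  have rec1: "a (Suc k) \<le> a k - (a k)^2 / (2 * R)" if "k \<ge> K" for k
  proof -
    define t where "t = a k / R"
    have t0: "0 \<le> t" using ann[of k] R by (simp add: t_def)
    have Q: "quad_norm_sq D (u k - x k) \<le> R"
    proof -
      have "M * norm (u k - x k)^2 \<le> M * (4 * B^2)"
        by (rule mult_left_mono[OF nb[OF that]]) (use M(1) in simp)
      thus ?thesis using M(2)[of "u k - x k"] ann[of 0] by (simp add: R_def)
    qed
    have "a (Suc k) \<le> a k + t * (grad (x k) \<bullet> (u k - x k)) + t^2/2 * quad_norm_sq D (u k - x k)"
      by (rule stepk[OF that])
    also have "\<dots> \<le> a k + t * (- a k) + t^2/2 * R"
      using mult_left_mono[OF gi[OF that] t0] mult_left_mono[OF Q, of "t^2/2"] by simp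
    also have "\<dots> = a k - (a k)^2 / (2 * R)"
      using R by (simp add: t_def field_simps power2_eq_square)
    finally show ?thesis .
  qed
  have r1: "a (K + j) \<le> 2 * R / (real j + 1)" for j
    by (rule rate1[where a = a and K = K and R = R, OF rec1 ann aR R])
  have part1: "\<exists>K c. c > 0 \<and> (\<forall>k\<ge>K. f (x k) - fstar \<le> c / real k)"
  proof (intro exI[of _ K] exI[of _ "2 * R * (real K + 1)"] conjI allI impI)
    show "0 < 2 * R * (real K + 1)" using R by simp
    fix k assume k: "K \<le> k"
    define j where "j = k - K"
    have kj: "k = K + j" using k by (simp add: j_def)
    have "a k \<le> 2 * R / (real j + 1)" using r1[of j] kj by simp
    also have "\<dots> \<le> 2 * R * (real K + 1) / real k"
    proof -
      have "real k \<le> (real K + 1) * (real j + 1)" using kj by (simp add: algebra_simps)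
      moreover have "real k > 0" using k by (simp add: K_def)
      ultimately have le: "2 * R * (real K + 1) / ((real K + 1) * (real j + 1)) \<le> 2 * R * (real K + 1) / real k"
        using R by (intro divide_left_mono) auto
      have eq: "2 * R / (real j + 1) = 2 * R * (real K + 1) / ((real K + 1) * (real j + 1))" by simp
      show ?thesis using le unfolding eq .
    qed
    finally show "f (x k) - fstar \<le> 2 * R * (real K + 1) / real k" by (simp add: a_def)
  qed
  have part2: "\<exists>c \<rho>. c > 0 \<and> 0 < \<rho> \<and> \<rho> < 1 \<and>
                   (\<forall>\<^sub>F k in sequentially. f (x k) - fstar \<le> c * \<rho> ^ k)"
    if rsc: "restricted_strongly_convex s f grad"
  proof -
    obtain \<sigma> where \<sigma>: "\<sigma> > 0" "\<And>p q. l0norm (p - q) \<le> s \<Longrightarrow> f q \<ge> f p + grad p \<bullet> (q - p) + \<sigma> / 2 * norm (p - q)^2"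
      using rsc unfolding restricted_strongly_convex_def by blast
    define t where "t = min (1/2) (\<sigma> / M)"
    have t0: "0 < t" "t \<le> 1/2" using \<sigma>(1) M(1) unfolding t_def by (simp, linarith)
    have tM: "t * M \<le> \<sigma>" using M(1) by (simp add: t_def min_def field_simps)
    define \<rho> where "\<rho> = 1 - t"
    have rec2: "a (Suc k) \<le> \<rho> * a k" if "k \<ge> K" for k
    proof -
      define n2 where "n2 = norm (u k - x k)^2"
      have n20: "n2 \<ge> 0" by (simp add: n2_def)
      have g2: "grad (x k) \<bullet> (u k - x k) \<le> - a k - \<sigma>/2 * n2"
        using \<sigma>(2)[OF lsp[OF that]] u[OF that] by (simp add: a_def n2_def norm_minus_commute)
      have Q: "quad_norm_sq D (u k - x k) \<le> M * n2" using M(2) by (simp add: n2_def)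
      have "a (Suc k) \<le> a k + t * (grad (x k) \<bullet> (u k - x k)) + t^2/2 * quad_norm_sq D (u k - x k)"
        by (rule stepk[OF that])
      also have "\<dots> \<le> a k + t * (- a k - \<sigma>/2 * n2) + t^2/2 * (M * n2)"
      proof -
        have h1: "t * (grad (x k) \<bullet> (u k - x k)) \<le> t * (- a k - \<sigma>/2 * n2)"
          using g2 t0 by (intro mult_left_mono) auto
        have h2: "t^2/2 * quad_norm_sq D (u k - x k) \<le> t^2/2 * (M * n2)"
          using Q by (intro mult_left_mono) auto
        show ?thesis using h1 h2 by linarith
      qed
      also have "\<dots> \<le> \<rho> * a k"
      proof -
        have "t * (t * M) * n2 \<le> t * \<sigma> * n2"
          using tM t0 n20 by (intro mult_right_mono mult_left_mono) auto
        thus ?thesis by (simp add: \<rho>_def algebra_simps power2_eq_square)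
      qed
      finally show ?thesis .
    qed
    have rho01: "0 < \<rho>" "\<rho> < 1" using t0 by (auto simp: \<rho>_def)
    have r2: "a (K + j) \<le> \<rho> ^ j * a K" for j
      using rate2[where a = a and K = K and \<rho> = \<rho>, OF rec2 less_imp_le[OF rho01(1)]] by blast
    show ?thesis
    proof (rule exI[of _ "a K / \<rho> ^ K + 1"], rule exI[of _ \<rho>], intro conjI)
      have "0 \<le> a K / \<rho> ^ K" using ann[of K] rho01 by (intro divide_nonneg_pos) auto
      thus "0 < a K / \<rho> ^ K + 1" by linarith
      have ev: "f (x k) - fstar \<le> (a K / \<rho> ^ K + 1) * \<rho> ^ k" if k: "K \<le> k" for k
      proof -
        define j where "j = k - K"
        have kj: "k = K + j" using k by (simp add: j_def)
        have "a k \<le> \<rho> ^ j * a K" using r2[of j] kj by simp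
        also have "\<dots> = (a K / \<rho> ^ K) * \<rho> ^ k" using rho01 by (simp add: kj power_add)
        also have "\<dots> \<le> (a K / \<rho> ^ K + 1) * \<rho> ^ k"
          using rho01 by (simp add: distrib_right)
        finally show ?thesis by (simp add: a_def)
      qed
      show "\<forall>\<^sub>F k in sequentially. f (x k) - fstar \<le> (a K / \<rho> ^ K + 1) * \<rho> ^ k"
        unfolding eventually_sequentially using ev by blast
      show "0 < \<rho>" by (rule rho01(1))
      show "\<rho> < 1" by (rule rho01(2))
    qed
  qed
  show ?thesis using lim part1 part2 by blast
qed

end
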